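(* Let $f:\mathbb{R}^n\to\mathbb{R}$ be $C^2$ smooth, $\lambda>0$, $h(x)=\lambda\|x\|_1$, $t>0$, and let $x^*$ be a root of $F_{\mathrm{PGM}}(x):=x-\mathrm{prox}_{th}(x-t\nabla f(x))$. Suppose strict complementarity holds at $x^*$, i.e. there is no index $i$ with $x^*_i=0$ and $|[\nabla f(x^* )]_i|=\lambda$. Then there exists $b>0$ such that the Jacobian of $\mathrm{prox}_{th}$ exists and is constant on the set $\{x-t\nabla f(x): x\in\bar B(x^*,b)\}$.
   Context: $\mathrm{prox}_{th}(y)=\arg\min_x\{h(x)+\frac{1}{2t}\|x-y\|^2\}$ (componentwise soft thresholding at level $t\lambda$). $\bar B(x,r)$ is the closed Euclidean ball of radius $r$ centered at $x$. *)

theory Defs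
  imports "HOL-Analysis.Analysis"
begin

definition l1norm :: "real^'n \<Rightarrow> real" where
  "l1norm x = (\<Sum>i\<in>UNIV. \<bar>x $ i\<bar>)"

definition prox_l1 :: "real \<Rightarrow> real \<Rightarrow> real^'n \<Rightarrow> real^'n" where
  "prox_l1 lam t y =
     arg_min (\<lambda>z. lam * l1norm z + (1 / (2 * t)) * (norm (z - y))\<^sup>2) (\<lambda>_. True)"

end

theory Submission
  imports Defs
begin

definition soft :: "real \<Rightarrow> real \<Rightarrow> real \<Rightarrow> real" where
  "soft lam t a = (if a > t*lam then a - t*lam else if a < -(t*lam) then a + t*lam else 0)"

lemma soft_key:
  fixes lam t a y :: real
  assumes "lam > 0" "t > 0"
  shows "2*t*lam*\<bar>a\<bar> + (a-y)^2 \<ge> 2*t*lam*\<bar>soft lam t y\<bar> + (soft lam t y - y)^2 + (a - soft lam t y)^2"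
proof -
  have c: "t*lam > 0" using assms by simp
  consider "y > t*lam" | "y < -(t*lam)" | "\<bar>y\<bar> \<le> t*lam" by linarith
  then show ?thesis
  proof cases
    case 1
    then have s: "soft lam t y = y - t*lam" by (simp add: soft_def)
    have "(a-y)^2 = (a - (y - t*lam))^2 + (t*lam)^2 - 2*(a - (y-t*lam))*(t*lam)"
      by (simp add: power2_eq_square algebra_simps)
    have "2*t*lam*\<bar>soft lam t y\<bar> + (soft lam t y - y)^2 + (a - soft lam t y)^2
        = (a-y)^2 + 2*(t*lam)*a" unfolding s using 1 c by (simp add: power2_eq_square algebra_simps)
    moreover have "t*lam*\<bar>a\<bar> \<ge> t*lam*a" using c by (simp add: mult_left_mono)
    ultimately show ?thesis by (simp add: algebra_simps)
  next
    case 2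
    then have s: "soft lam t y = y + t*lam" using c by (simp add: soft_def)
    have "(a-y)^2 = (a - (y + t*lam))^2 + (t*lam)^2 + 2*(a - (y+t*lam))*(t*lam)"
      by (simp add: power2_eq_square algebra_simps)
    have "2*t*lam*\<bar>soft lam t y\<bar> + (soft lam t y - y)^2 + (a - soft lam t y)^2
        = (a-y)^2 - 2*(t*lam)*a" unfolding s using 2 c by (simp add: power2_eq_square algebra_simps)
    moreover have "t*lam*\<bar>a\<bar> \<ge> - (t*lam*a)" using c mult_left_mono[of "-a" "\<bar>a\<bar>" "t*lam"] by simp
    ultimately show ?thesis by (simp add: algebra_simps)
  next
    case 3
    then have s: "soft lam t y = 0" by (auto simp add: soft_def)
    have "\<bar>a*y\<bar> \<le> \<bar>a\<bar> * (t*lam)" using 3 by (simp add: abs_mult mult_left_mono)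
    then have "a*y \<le> \<bar>a\<bar> * (t*lam)" by linarith
    then show ?thesis using s by (simp add: power2_eq_square algebra_simps)
  qed
qed

lemma soft_scalar:
  fixes lam t a y :: real
  assumes "lam > 0" "t > 0"
  shows "lam*\<bar>a\<bar> + (a-y)^2/(2*t) \<ge> lam*\<bar>soft lam t y\<bar> + (soft lam t y - y)^2/(2*t) + (a - soft lam t y)^2/(2*t)"
proof -
  have "(2*t)*(lam*\<bar>a\<bar> + (a-y)^2/(2*t)) = 2*t*lam*\<bar>a\<bar> + (a-y)^2"
    using assms by (simp add: field_simps)
  moreover have "(2*t)*(lam*\<bar>soft lam t y\<bar> + (soft lam t y - y)^2/(2*t) + (a - soft lam t y)^2/(2*t))
      = 2*t*lam*\<bar>soft lam t y\<bar> + (soft lam t y - y)^2 + (a - soft lam t y)^2"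
    using assms by (simp add: field_simps)
  ultimately show ?thesis using soft_key[OF assms, where a=a and y=y] assms
    by (metis mult_le_cancel_left_pos zero_less_mult_iff zero_less_numeral)
qed

lemma norm_sq_sum: "(norm (z - y :: real^'n))^2 = (\<Sum>i\<in>UNIV. (z$i - y$i)^2)"
  unfolding power2_norm_eq_inner inner_vec_def by (simp add: power2_eq_square)

lemma obj_sum:
  "lam * l1norm z + (1 / (2 * t)) * (norm (z - y :: real^'n))\<^sup>2
   = (\<Sum>i\<in>UNIV. lam*\<bar>z$i\<bar> + (z$i - y$i)^2/(2*t))"
  by (simp add: l1norm_def norm_sq_sum sum.distrib sum_distrib_left sum_divide_distrib)

lemma prox_soft:
  fixes y :: "real^'n"
  assumes "lam > 0" "t > 0"
  shows "prox_l1 lam t y = (\<chi> i. soft lam t (y$i))"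
proof -
  define S :: "real^'n" where "S = (\<chi> i. soft lam t (y$i))"
  define F where "F = (\<lambda>z::real^'n. lam * l1norm z + (1 / (2 * t)) * (norm (z - y))\<^sup>2)"
  have ge: "F z \<ge> F S + (norm (z - S))^2/(2*t)" for z
  proof -
    have "F S + (norm (z - S))^2/(2*t) = (\<Sum>i\<in>UNIV. lam*\<bar>S$i\<bar> + (S$i - y$i)^2/(2*t) + (z$i - S$i)^2/(2*t))"
      unfolding F_def by (simp add: l1norm_def norm_sq_sum sum.distrib sum_divide_distrib sum_distrib_left)
    also have "\<dots> \<le> (\<Sum>i\<in>UNIV. lam*\<bar>z$i\<bar> + (z$i - y$i)^2/(2*t))"
      by (rule sum_mono) (simp add: S_def soft_scalar[OF assms])
    also have "\<dots> = F z" unfolding F_def obj_sum ..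
    finally show ?thesis .
  qed
  have strict: "F S < F z" if "z \<noteq> S" for z
  proof -
    have "norm (z - S) > 0" using that by simp
    then have "(norm (z - S))^2/(2*t) > 0" using assms by simp
    then show ?thesis using ge[of z] by linarith
  qed
  have "is_arg_min F (\<lambda>_. True) S"
    unfolding is_arg_min_def by (metis strict less_not_sym order_less_irrefl)
  moreover have "x = S" if "is_arg_min F (\<lambda>_. True) x" for x
    using that strict unfolding is_arg_min_def by blast
  ultimately have "arg_min F (\<lambda>_. True) = S"
    unfolding arg_min_def by (rule someI2)
  then show ?thesis unfolding prox_l1_def F_def[symmetric] S_def .
qed

theorem lemma3p4:
  fixes f :: "real^'n \<Rightarrow> real" and g :: "real^'n \<Rightarrow> real^'n"
    and lam t :: real and xs :: "real^'n"
  assumes grad: "\<And>x. (f has_derivative (\<lambda>h. g x \<bullet> h)) (at x)"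
    and C2: "\<exists>H :: real^'n \<Rightarrow> ((real^'n) \<Rightarrow>\<^sub>L (real^'n)).
               (\<forall>x. (g has_derivative blinfun_apply (H x)) (at x)) \<and> continuous_on UNIV H"
    and lam_pos: "lam > 0" and t_pos: "t > 0"
    and root: "xs - prox_l1 lam t (xs - t *\<^sub>R g xs) = 0"
    and strict_compl: "\<not> (\<exists>i. xs $ i = 0 \<and> \<bar>g xs $ i\<bar> = lam)"
  shows "\<exists>b > 0. \<exists>J :: real^'n^'n.
           \<forall>y \<in> (\<lambda>x. x - t *\<^sub>R g x) ` cball xs b.
             (prox_l1 lam t has_derivative (\<lambda>v. J *v v)) (at y)"
proof -
  obtain H :: "real^'n \<Rightarrow> ((real^'n) \<Rightarrow>\<^sub>L (real^'n))"
    where H: "\<And>x. (g has_derivative blinfun_apply (H x)) (at x)" using C2 by blast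
  define phi where "phi = (\<lambda>x. x - t *\<^sub>R g x)"
  have contphi: "continuous (at xs) phi"
    unfolding phi_def using has_derivative_continuous[OF H[of xs]]
    by (intro continuous_intros) auto
  define ys where "ys = xs - t *\<^sub>R g xs"
  have xsi: "xs$i = soft lam t (ys$i)" for i
    using root prox_soft[OF lam_pos t_pos, of ys] unfolding ys_def
    by (metis eq_iff_diff_eq_0 vec_lambda_beta)
  have neq: "\<bar>ys$i\<bar> \<noteq> t*lam" for i
  proof (cases "xs$i = 0")
    case True
    then have "ys$i = - t * g xs $ i" by (simp add: ys_def)
    moreover have "\<bar>g xs $ i\<bar> \<noteq> lam" using strict_compl True by blast
    ultimately show ?thesis using t_pos by (simp add: abs_mult)
  next
    case False
    then show ?thesis using xsi[of i] by (auto simp: soft_def abs_if split: if_splits)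
  qed
  define \<delta> where "\<delta> = Min (range (\<lambda>i. \<bar>\<bar>ys$i\<bar> - t*lam\<bar>))"
  have dpos: "\<delta> > 0" unfolding \<delta>_def using neq by (subst Min_gr_iff) auto
  have dle: "\<delta> \<le> \<bar>\<bar>ys$i\<bar> - t*lam\<bar>" for i unfolding \<delta>_def by (rule Min_le) auto
  obtain d where d: "d > 0" "\<And>x. dist x xs < d \<Longrightarrow> dist (phi x) (phi xs) < \<delta>"
    using contphi dpos unfolding continuous_at_eps_delta by blast
  define J :: "real^'n^'n" where "J = (\<chi> i j. if i = j \<and> \<bar>ys$i\<bar> > t*lam then 1 else 0)"
  define c :: "real^'n" where "c = (\<chi> i. if ys$i > t*lam then -(t*lam) else if ys$i < -(t*lam) then t*lam else 0)"
  have Jv: "(J *v z)$i = (if \<bar>ys$i\<bar> > t*lam then z$i else 0)" for z i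
    unfolding J_def matrix_vector_mult_def by (simp add: if_distrib[of "\<lambda>a. a * _"] cong: if_cong)
  have loc: "prox_l1 lam t z = J *v z + c" if "z \<in> ball ys \<delta>" for z
  proof -
    have "soft lam t (z$i) = (J *v z)$i + c$i" for i
    proof -
      have "\<bar>z$i - ys$i\<bar> < \<delta>" using that component_le_norm_cart[of "z - ys" i]
        by (simp add: dist_norm norm_minus_commute)
      then show ?thesis using dle[of i] neq[of i] mult_pos_pos[OF t_pos lam_pos] unfolding Jv c_def soft_def
        by (auto split: if_splits)
    qed
    then show ?thesis using prox_soft[OF lam_pos t_pos, of z] by (simp add: vec_eq_iff)
  qed
  have "(prox_l1 lam t has_derivative (\<lambda>v. J *v v)) (at y)" if "y \<in> phi ` cball xs (d/2)" for y
  proof -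
    from that obtain x where x: "x \<in> cball xs (d/2)" "y = phi x" by blast
    have "dist x xs < d" using x d by (simp add: dist_commute)
    then have "dist y ys < \<delta>" using d x unfolding phi_def ys_def by auto
    then have yin: "y \<in> ball ys \<delta>" by (simp add: dist_commute)
    have "((\<lambda>z. J *v z + c) has_derivative (\<lambda>v. J *v v)) (at y)"
      by (intro has_derivative_add_const linear_imp_has_derivative matrix_vector_mul_linear)
    then show ?thesis
      by (rule has_derivative_transform_within_open[OF _ open_ball yin]) (simp add: loc)
  qed
  then show ?thesis using d unfolding phi_def by (intro exI[of _ "d/2"]) auto
qed

end
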